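(* Let $n\ge2$, $0\le\alpha<1$, $\sigma=1-\alpha^2$, and let $M$ be the matrix of $S^*(\phi_{-\alpha})$, where $\phi_{-\alpha}(z)=\left(\dfrac{z+\alpha}{1+\alpha z}\right)^n$; explicitly $M$ is the $n\times n$ upper triangular Toeplitz matrix with $-\alpha$ on the diagonal, $\sigma$ on the first superdiagonal and $\sigma\alpha^{j-1}$ on the $j$-th superdiagonal ($1\le j\le n-1$). For real $\theta$ and real $\lambda$ with $|\lambda|<1$, let $D_n(\lambda,\theta)=\det\big(\mathscr{R}e(e^{-i\theta}M)-\lambda I_n\big)$. Then $$D_{n}(\lambda,\theta)=\dfrac{(1-\lambda^{2})^{-\frac{1}{2}}}{2^n}\,\mathscr{R}e\Bigg(\left(\left(1-\lambda^{2}\right)^{\frac{1}{2}}+i\lambda\right)\left(-2\alpha\cos\theta-(1+\alpha^{2})\lambda+i(1-\alpha^{2})(1-\lambda^{2})^{\frac{1}{2}}\right)^n\Bigg).$$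
   Context: $\mathscr{R}e(X)=\frac12(X+X^* )$ for a matrix $X$, and $\mathscr{R}e(z)$ is the real part of a complex number $z$. $S^*(\phi)$ denotes the restriction of the backward shift $S^*f=(f-f(0))/z$ to the model space $\mathbb{H}^2\ominus\phi\mathbb{H}^2$. *)

theory Defs
  imports Complex_Main "Jordan_Normal_Form.Determinant"
begin

definition cadjoint :: "complex mat \<Rightarrow> complex mat" where
  "cadjoint X = mat (dim_col X) (dim_row X) (\<lambda>(i,j). cnj (X $$ (j,i)))"

definition Re_mat :: "complex mat \<Rightarrow> complex mat" where
  "Re_mat X = (1/2 :: complex) \<cdot>\<^sub>m (X + cadjoint X)"

definition Mmat :: "nat \<Rightarrow> real \<Rightarrow> complex mat" where
  "Mmat n \<alpha> = mat n n (\<lambda>(i,j).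
      if i = j then complex_of_real (- \<alpha>)
      else if i < j then complex_of_real ((1 - \<alpha>\<^sup>2) * \<alpha> ^ (j - i - 1))
      else 0)"

definition Dn :: "nat \<Rightarrow> real \<Rightarrow> real \<Rightarrow> real \<Rightarrow> complex" where
  "Dn n \<alpha> lam \<theta> = det (Re_mat (exp (- \<i> * complex_of_real \<theta>) \<cdot>\<^sub>m Mmat n \<alpha>)
                        - complex_of_real lam \<cdot>\<^sub>m 1\<^sub>m n)"

end

theory Submission
  imports Defs
begin

definition Tm :: "nat \<Rightarrow> complex \<Rightarrow> complex \<Rightarrow> complex \<Rightarrow> complex \<Rightarrow> complex mat" where
  "Tm n d a b al = mat n n (\<lambda>(i,j). if i = j then d else if i < j then a * al^(j-i-1) else b * al^(i-j-1))"

lemma Tm_carrier: "Tm n d a b al \<in> carrier_mat n n" by (simp add: Tm_def)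

lemma Tm_0: "det (Tm 0 d a b al) = 1" using Tm_carrier by simp
lemma Tm_1: "det (Tm 1 d a b al) = d" by (subst det_single[OF Tm_carrier]) (simp add: Tm_def)

lemma Tm_rec: "det (Tm (Suc (Suc n)) d a b al) =
   ((1+al^2)*d - al*(a+b)) * det (Tm (Suc n) d a b al) - (a - al*d)*(b-al*d) * det (Tm n d a b al)"
proof -
  let ?N = "Suc (Suc n)"
  let ?A = "Tm ?N d a b al"
  let ?e = "(1+al^2)*d - al*(a+b)"
  have A: "?A \<in> carrier_mat ?N ?N" by (rule Tm_carrier)
  define R where "R = addrow (-al) 0 1 ?A"
  define B where "B = addcol (-al) 0 1 R"
  have R: "R \<in> carrier_mat ?N ?N" using A unfolding R_def by simp
  have "det B = det ?A" unfolding B_def using det_addcol[OF _ _ R, of 1 0] det_addrow[OF _ _ A, of 1 0] R_def by simp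
  define C where "C = mat ?N ?N (\<lambda>(i,j). if i=0 then (if j=0 then ?e else if j = 1 then a - al*d else 0)
      else if j = 0 then (if i=1 then b - al*d else 0) else ?A $$ (i,j))"
  have C: "C \<in> carrier_mat ?N ?N" unfolding C_def by simp
  have BC: "B = C"
  proof (rule eq_matI)
    fix i j assume i: "i < dim_row C" and j: "j < dim_col C"
    hence i': "i < ?N" and j': "j < ?N" unfolding C_def by auto
    have Rij: "\<And>i j. i < ?N \<Longrightarrow> j < ?N \<Longrightarrow> R $$ (i,j) = (if i = 0 then -al * ?A $$ (1,j) + ?A $$ (i,j) else ?A $$ (i,j))"
      unfolding R_def using A by auto
    have Bij: "B $$ (i,j) = (if j = 0 then -al * R $$ (i,1) + R $$ (i,j) else R $$ (i,j))"
      unfolding B_def using R i' j' by auto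
    have Aij: "\<And>i j. i < ?N \<Longrightarrow> j < ?N \<Longrightarrow> ?A $$ (i,j) = (if i = j then d else if i < j then a * al^(j-i-1) else b * al^(i-j-1))"
      unfolding Tm_def by auto
    have ci: "i = 0 \<or> i = 1 \<or> (\<exists>k. i = Suc (Suc k))" by presburger
    have cj: "j = 0 \<or> j = 1 \<or> (\<exists>k. j = Suc (Suc k))" by presburger
    show "B $$ (i,j) = C $$ (i,j)"
      using ci cj i' j' unfolding Bij C_def
      by (auto simp: Rij Aij algebra_simps power2_eq_square)
  qed (auto simp: B_def R_def C_def Tm_def)
  have E1: "det ?A = ?e * cofactor C 0 0 + (a - al*d) * cofactor C 0 1"
  proof -
    have "det ?A = det C" using \<open>det B = det ?A\<close> BC by simp
    also have "det C = (\<Sum>j<?N. C $$ (0,j) * cofactor C 0 j)" by (rule laplace_expansion_row[OF C]) simp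
    also have "\<dots> = ?e * cofactor C 0 0 + (a - al*d) * cofactor C 0 1"
      by (simp only: sum.lessThan_Suc_shift) (simp add: C_def)
    finally show ?thesis .
  qed
  have D1: "mat_delete C 0 0 = Tm (Suc n) d a b al"
    by (rule eq_matI) (auto simp: mat_delete_def C_def Tm_def)
  have G: "mat_delete C 0 1 \<in> carrier_mat (Suc n) (Suc n)" using mat_delete_carrier[OF C] by simp
  have E2: "det (mat_delete C 0 1) = (b - al*d) * cofactor (mat_delete C 0 1) 0 0"
  proof -
    have "det (mat_delete C 0 1) = (\<Sum>i<Suc n. mat_delete C 0 1 $$ (i,0) * cofactor (mat_delete C 0 1) i 0)"
      by (rule laplace_expansion_column[OF G]) simp
    also have "\<dots> = (b - al*d) * cofactor (mat_delete C 0 1) 0 0"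
      by (simp only: sum.lessThan_Suc_shift) (simp add: C_def mat_delete_def)
    finally show ?thesis .
  qed
  have D2: "mat_delete (mat_delete C 0 1) 0 0 = Tm n d a b al"
    by (rule eq_matI) (auto simp: mat_delete_def C_def Tm_def)
  show ?thesis using E1 E2 D1 D2 by (simp add: cofactor_def)
qed

lemma aux: fixes lam s \<alpha> :: real assumes h: "lam * lam + s * s = 1" shows
    "4 +
     (\<alpha> * (\<alpha> * (\<alpha> * (\<alpha> * 4))) +
      (\<alpha> * (\<alpha> * (lam * (lam * 8))) + \<alpha> * (\<alpha> * (s * (s * 8))))) =
     lam * (lam * 4) +
     (s * (s * 4) +
      (\<alpha> * (\<alpha> * 8) +
       (\<alpha> * (\<alpha> * (\<alpha> * (\<alpha> * (lam * (lam * 4))))) +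
        \<alpha> * (\<alpha> * (\<alpha> * (\<alpha> * (s * (s * 4))))))))" (is "?L = ?R")
proof -
  have "?L - ?R = (1 - (lam*lam+s*s)) * (4 + 4*(\<alpha>*\<alpha>*\<alpha>*\<alpha>) - 8*(\<alpha>*\<alpha>))" by (simp add: algebra_simps)
  then show ?thesis using h by simp
qed

lemma Re_rec: fixes u w :: complex
  shows "Re (u * w^(Suc(Suc n))) = 2*Re w * Re (u*w^(Suc n)) - (cmod w)^2 * Re(u*w^n)"
proof -
  have ww: "w*w = of_real(2*Re w)*w - of_real((cmod w)^2)"
    using cmod_power2[of w] by (simp add: complex_eq_iff power2_eq_square algebra_simps)
  have "u * w^(Suc(Suc n)) = (u*w^n)*(w*w)" by (simp add: algebra_simps)
  also have "\<dots> = of_real(2*Re w) * (u*w^(Suc n)) - of_real((cmod w)^2) * (u*w^n)"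
    unfolding ww by (simp add: algebra_simps)
  finally show ?thesis by simp
qed

lemma mat_eq: fixes \<alpha> lam \<theta> :: real
  shows "Re_mat (exp (- \<i> * complex_of_real \<theta>) \<cdot>\<^sub>m Mmat n \<alpha>) - complex_of_real lam \<cdot>\<^sub>m 1\<^sub>m n
   = Tm n (of_real (-\<alpha> * cos \<theta> - lam)) (exp (- \<i> * complex_of_real \<theta>) * of_real ((1-\<alpha>^2)/2))
          (exp (\<i> * complex_of_real \<theta>) * of_real ((1-\<alpha>^2)/2)) (of_real \<alpha>)"
proof (rule eq_matI)
  let ?c = "exp (- \<i> * complex_of_real \<theta>)"
  have cc: "cnj ?c = exp (\<i> * complex_of_real \<theta>)" by (simp add: complex_eq_iff Re_exp Im_exp)
  have sc: "?c + exp (\<i> * complex_of_real \<theta>) = of_real (2 * cos \<theta>)"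
    by (simp add: complex_eq_iff Re_exp Im_exp)
  fix i j assume i: "i < dim_row (Tm n (of_real (-\<alpha> * cos \<theta> - lam)) (?c * of_real ((1-\<alpha>^2)/2))
          (exp (\<i> * complex_of_real \<theta>) * of_real ((1-\<alpha>^2)/2)) (of_real \<alpha>))"
    and j: "j < dim_col (Tm n (of_real (-\<alpha> * cos \<theta> - lam)) (?c * of_real ((1-\<alpha>^2)/2))
          (exp (\<i> * complex_of_real \<theta>) * of_real ((1-\<alpha>^2)/2)) (of_real \<alpha>))"
  hence i: "i < n" and j: "j < n" by (auto simp: Tm_def)
  consider "i = j" | "i < j" | "j < i" by linarith
  thus "(Re_mat (?c \<cdot>\<^sub>m Mmat n \<alpha>) - complex_of_real lam \<cdot>\<^sub>m 1\<^sub>m n) $$ (i,j) = Tm n (of_real (-\<alpha> * cos \<theta> - lam)) (?c * of_real ((1-\<alpha>^2)/2))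
          (exp (\<i> * complex_of_real \<theta>) * of_real ((1-\<alpha>^2)/2)) (of_real \<alpha>) $$ (i,j)"
  proof cases
    case 1
    have "(1/2) * (?c * of_real (-\<alpha>) + exp (\<i> * complex_of_real \<theta>) * of_real (-\<alpha>)) - of_real lam
        = complex_of_real (-\<alpha> * cos \<theta> - lam)"
      using sc by (simp add: algebra_simps) (simp add: distrib_left[symmetric])
    then show ?thesis using 1 i j cc
      by (simp add: Re_mat_def cadjoint_def Mmat_def Tm_def)
  next
    case 2 then show ?thesis using i j cc
      by (simp add: Re_mat_def cadjoint_def Mmat_def Tm_def)
  next
    case 3 then show ?thesis using i j cc
      by (simp add: Re_mat_def cadjoint_def Mmat_def Tm_def)
  qed
qed (auto simp: Re_mat_def cadjoint_def Mmat_def Tm_def)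

theorem mainTheorem7:
  fixes n :: nat and \<alpha> lam \<theta> :: real
  assumes "n \<ge> 2" and "0 \<le> \<alpha>" and "\<alpha> < 1" and "\<bar>lam\<bar> < 1"
  shows "Dn n \<alpha> lam \<theta> = complex_of_real (
    (1 / sqrt (1 - lam\<^sup>2)) / 2 ^ n *
    Re ((complex_of_real (sqrt (1 - lam\<^sup>2)) + \<i> * complex_of_real lam) *
        (complex_of_real (- 2 * \<alpha> * cos \<theta> - (1 + \<alpha>\<^sup>2) * lam)
         + \<i> * complex_of_real ((1 - \<alpha>\<^sup>2) * sqrt (1 - lam\<^sup>2))) ^ n))"
proof -
  define s where "s = sqrt (1 - lam\<^sup>2)"
  define X where "X = - 2 * \<alpha> * cos \<theta> - (1 + \<alpha>\<^sup>2) * lam"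
  define Y where "Y = (1 - \<alpha>\<^sup>2) * s"
  define u where "u = complex_of_real s + \<i> * complex_of_real lam"
  define w where "w = complex_of_real X + \<i> * complex_of_real Y"
  define F where "F = (\<lambda>n::nat. complex_of_real ((1 / s) / 2 ^ n * Re (u * w ^ n)))"
  define d where "d = complex_of_real (-\<alpha> * cos \<theta> - lam)"
  define a where "a = exp (- \<i> * complex_of_real \<theta>) * of_real ((1-\<alpha>^2)/2)"
  define b where "b = exp (\<i> * complex_of_real \<theta>) * of_real ((1-\<alpha>^2)/2)"
  define al where "al = complex_of_real \<alpha>"
  have l2: "lam^2 < 1" using assms(4) by (simp add: abs_square_less_1)
  have spos: "s > 0" unfolding s_def using l2 by simp
  have s2: "s^2 = 1 - lam^2" unfolding s_def using l2 by simp
  have sc: "(sin \<theta>)^2 + (cos \<theta>)^2 = 1" by simp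
  have DT: "Dn n \<alpha> lam \<theta> = det (Tm n d a b al)"
    unfolding Dn_def mat_eq d_def a_def b_def al_def ..
  have Ee: "(1+al^2)*d - al*(a+b) = complex_of_real X"
    unfolding a_def b_def d_def al_def X_def
    by (simp add: complex_eq_iff Re_exp Im_exp power2_eq_square algebra_simps) (simp add: field_simps)
  have Eq: "(a - al*d)*(b-al*d) = complex_of_real ((cmod w)^2/4)"
    unfolding a_def b_def d_def al_def cmod_power2 w_def X_def Y_def
    apply (simp add: complex_eq_iff Re_exp Im_exp power2_eq_square algebra_simps)
    apply (intro conjI)
    using s2 unfolding power2_eq_square apply (simp add: field_simps)
     apply (rule aux, simp)
    by (simp add: field_simps)
  have Frec: "F (Suc (Suc k)) = complex_of_real X * F (Suc k) - complex_of_real ((cmod w)^2/4) * F k" for k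
  proof -
    have Rw: "Re w = X" unfolding w_def by simp
    have r: "(1/s)/2^(Suc(Suc k)) * (2*X*R1 - c*R0) = X*((1/s)/2^Suc k * R1) - c/4 * ((1/s)/2^k*R0)"
      for R1 R0 c :: real using spos by (simp add: field_simps)
    show ?thesis unfolding F_def Re_rec[of u w k] Rw r by simp
  qed
  have F0: "F 0 = 1" unfolding F_def u_def using spos by simp
  have F1: "F 1 = d" unfolding F_def u_def w_def d_def Y_def X_def using spos
    by (simp add: field_simps power2_eq_square)
  have "det (Tm k d a b al) = F k \<and> det (Tm (Suc k) d a b al) = F (Suc k)" for k
  proof (induction k)
    case 0 then show ?case using F0 F1 Tm_0 Tm_1 by simp
  next
    case (Suc k) then show ?case using Tm_rec[of k d a b al] Frec[of k] Ee Eq by simp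
  qed
  then have "Dn n \<alpha> lam \<theta> = F n" using DT by simp
  then show ?thesis unfolding F_def u_def w_def s_def X_def Y_def .
qed
end
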